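(* Let $\phi:V\to V$ be a continuous coherency preserver that is not degenerate. Then the map $\Phi:V\times\mathcal{Q}\to\mathcal{Q}$, $(a,p)\mapsto\varphi_a(p)$, is continuous.
   Context: Fix an integer $n\ge4$, let $V=\mathbb{R}^n$ with its standard topology and $q(x_1,\dots,x_n)=x_n^2-\sum_{k=1}^{n-1}x_k^2$. Points $x,y$ are coherent when $q(x-y)=0$; $\mathcal{C}(a)=\{m: q(m-a)=0\}$. A coherency preserver is a map $\phi:V\to V$ with $q(b-a)=0\Rightarrow q(\phi(b)-\phi(a))=0$; it is degenerate when its range is included in some $\mathcal{C}(c)$. Let $\mathcal{Q}=\{(x_1,\dots,x_{n-1},1): \sum_{k=1}^{n-1}x_k^2=1\}$ (with the subspace topology). For a non-degenerate continuous coherency preserver $\phi$, for every $a\in V$ and $p\in\mathcal{Q}$ there is a unique $p'\in\mathcal{Q}$ with $\phi(a+\mathbb{R}p)\subset\phi(a)+\mathbb{R}p'$; one sets $\varphi_a(p):=p'$, which defines $\varphi_a:\mathcal{Q}\to\mathcal{Q}$. *)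

theory Defs
  imports "HOL-Analysis.Analysis"
begin

text \<open>V = real^'n; the distinguished coordinate e plays the role of x_n
  (the remaining coordinates are x_1,...,x_{n-1}).\<close>

definition qf :: "'n::finite \<Rightarrow> real^'n \<Rightarrow> real" where
  "qf e x = (x $ e)^2 - (\<Sum>k\<in>UNIV - {e}. (x $ k)^2)"

definition coherent :: "'n::finite \<Rightarrow> real^'n \<Rightarrow> real^'n \<Rightarrow> bool" where
  "coherent e x y \<longleftrightarrow> qf e (x - y) = 0"

definition lightcone :: "'n::finite \<Rightarrow> real^'n \<Rightarrow> (real^'n) set" where
  "lightcone e a = {m. qf e (m - a) = 0}"

definition coherency_preserver :: "'n::finite \<Rightarrow> (real^'n \<Rightarrow> real^'n) \<Rightarrow> bool" where
  "coherency_preserver e \<phi> \<longleftrightarrow>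
     (\<forall>a b. qf e (b - a) = 0 \<longrightarrow> qf e (\<phi> b - \<phi> a) = 0)"

definition degenerate :: "'n::finite \<Rightarrow> (real^'n \<Rightarrow> real^'n) \<Rightarrow> bool" where
  "degenerate e \<phi> \<longleftrightarrow> (\<exists>c. range \<phi> \<subseteq> lightcone e c)"

definition Qset :: "'n::finite \<Rightarrow> (real^'n) set" where
  "Qset e = {x. x $ e = 1 \<and> (\<Sum>k\<in>UNIV - {e}. (x $ k)^2) = 1}"

definition varphi :: "'n::finite \<Rightarrow> (real^'n \<Rightarrow> real^'n) \<Rightarrow> real^'n \<Rightarrow> real^'n \<Rightarrow> real^'n" where
  "varphi e \<phi> a p = (THE p'. p' \<in> Qset e \<and>
      \<phi> ` {a + t *\<^sub>R p | t. True} \<subseteq> {\<phi> a + s *\<^sub>R p' | s. True})"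

end

theory Submission
  imports Defs
begin

definition bf :: "'n::finite \<Rightarrow> real^'n \<Rightarrow> real^'n \<Rightarrow> real" where
  "bf e u v = (u$e) * (v$e) - (\<Sum>k\<in>UNIV - {e}. (u$k) * (v$k))"

lemma qf_add: "qf e (u + t *\<^sub>R v) = qf e u + 2*t*bf e u v + t^2 * qf e v"
  unfolding qf_def bf_def
  by (simp add: power2_eq_square algebra_simps sum.distrib sum_distrib_left sum_subtractf)

lemma qf_diff: "qf e (u - v) = qf e u - 2*bf e u v + qf e v"
  using qf_add[of e u "-1" v] by simp

lemma qf_scale: "qf e (t *\<^sub>R v) = t^2 * qf e v"
  using qf_add[of e 0 t v] by (simp add: qf_def bf_def)

lemma qf_neg: "qf e (- v) = qf e v"
  using qf_scale[of e "-1" v] by simp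

lemma sq_expand: fixes u v :: "real^'n" shows "(\<Sum>k\<in>A. (aa * (u$k) - bb * (v$k))^2) =
   aa^2 * (\<Sum>k\<in>A. (u$k)^2) - 2*aa*bb*(\<Sum>k\<in>A. (u$k)*(v$k)) + bb^2 * (\<Sum>k\<in>A. (v$k)^2)"
  by (simp add: power2_eq_square algebra_simps sum.distrib sum_distrib_left sum_subtractf)

lemma collinear:
  assumes u: "qf e u = 0" and v: "qf e v = 0" and uv: "qf e (u - v) = 0"
  shows "(v$e) *\<^sub>R u = (u$e) *\<^sub>R v"
proof -
  have b: "bf e u v = 0" using qf_diff[of e u v] u v uv by simp
  have su: "(\<Sum>k\<in>UNIV-{e}. (u$k)^2) = (u$e)^2" using u by (simp add: qf_def)
  have sv: "(\<Sum>k\<in>UNIV-{e}. (v$k)^2) = (v$e)^2" using v by (simp add: qf_def)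
  have suv: "(\<Sum>k\<in>UNIV-{e}. (u$k)*(v$k)) = (u$e)*(v$e)" using b by (simp add: bf_def)
  have "(\<Sum>k\<in>UNIV-{e}. ((v$e) * (u$k) - (u$e) * (v$k))^2) = 0"
    unfolding sq_expand su sv suv by (simp add: power2_eq_square)
  hence "\<forall>k\<in>UNIV-{e}. ((v$e) * (u$k) - (u$e) * (v$k))^2 = 0"
    by (subst (asm) sum_nonneg_eq_0_iff) auto
  hence "\<And>k. (v$e) * (u$k) = (u$e) * (v$k)" by (metis Diff_iff UNIV_I eq_iff_diff_eq_0 mult.commute singletonD zero_eq_power2)
  thus ?thesis by (simp add: vec_eq_iff)
qed

lemma normalize_Q:
  assumes "qf e w = 0" "w \<noteq> 0"
  shows "(w$e) \<noteq> 0" "(1 / (w$e)) *\<^sub>R w \<in> Qset e"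
proof -
  show ne: "(w$e) \<noteq> 0"
  proof
    assume 0: "(w$e) = 0"
    hence "(\<Sum>k\<in>UNIV-{e}. (w$k)^2) = 0" using assms(1) by (simp add: qf_def)
    hence "\<forall>k\<in>UNIV-{e}. (w$k)^2 = 0" by (subst (asm) sum_nonneg_eq_0_iff) auto
    hence "w = 0" using 0 by (auto simp: vec_eq_iff)
    thus False using assms(2) by simp
  qed
  have "(\<Sum>k\<in>UNIV-{e}. ((1/(w$e)) * (w$k))^2) = (\<Sum>k\<in>UNIV-{e}. (1/(w$e))^2 * (w$k)^2)" by (simp add: power_divide)
  also have "\<dots> = (1/(w$e))^2 * (\<Sum>k\<in>UNIV-{e}. (w$k)^2)"
    by (simp add: power_mult_distrib sum_distrib_left del: one_divide_eq_0_iff)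
  also have "\<dots> = 1"
  proof -
    have "(\<Sum>k\<in>UNIV-{e}. (w$k)^2) = (w$e)^2" using assms(1) by (simp add: qf_def)
    thus ?thesis using ne by (simp add: power_divide)
  qed
  finally show "(1 / (w$e)) *\<^sub>R w \<in> Qset e" using ne by (simp add: Qset_def)
qed

lemma Q_light: "p \<in> Qset e \<Longrightarrow> qf e p = 0"
  by (simp add: Qset_def qf_def)

lemma bf_add: "bf e (u + d *\<^sub>R v) w = bf e u w + d * bf e v w"
  unfolding bf_def by (simp add: algebra_simps sum.distrib sum_distrib_left sum_subtractf)

lemma bf_axis: "p \<in> Qset e \<Longrightarrow> bf e (axis e 1) p = 1"
  unfolding bf_def Qset_def by (simp add: axis_def)

lemma isCont_qf: "isCont (qf e) x"
  unfolding qf_def by (intro continuous_intros)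

lemma nonconst:
  fixes e :: "'n::finite" and \<phi> :: "real^'n \<Rightarrow> real^'n"
  assumes cont: "continuous_on UNIV \<phi>"
    and pres: "coherency_preserver e \<phi>"
    and nd: "\<not> degenerate e \<phi>"
    and pQ: "p \<in> Qset e"
  shows "\<exists>t. \<phi> (a + t *\<^sub>R p) \<noteq> \<phi> a"
proof (rule ccontr)
  assume "\<not> ?thesis"
  hence const: "\<And>t. \<phi> (a + t *\<^sub>R p) = \<phi> a" by blast
  define c where "c = \<phi> a"
  have qp: "qf e p = 0" using pQ by (rule Q_light)
  have H: "qf e (\<phi> x - c) = 0" if B: "bf e (a - x) p \<noteq> 0" for x
  proof -
    define t where "t = - qf e (a - x) / (2 * bf e (a - x) p)"
    have "qf e ((a - x) + t *\<^sub>R p) = 0"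
      unfolding qf_add qp t_def using B by simp
    moreover have "(a - x) + t *\<^sub>R p = (a + t *\<^sub>R p) - x" by simp
    ultimately have "qf e (\<phi> (a + t *\<^sub>R p) - \<phi> x) = 0"
      using pres unfolding coherency_preserver_def by metis
    hence "qf e (c - \<phi> x) = 0" using const c_def by simp
    thus ?thesis using qf_neg[of e "c - \<phi> x"] by simp
  qed
  have "qf e (\<phi> x - c) = 0" for x
  proof -
    define g where "g = (\<lambda>y. qf e (\<phi> y - c))"
    define sg where "sg = (if bf e (a - x) p \<ge> 0 then 1 else (-1::real))"
    define y where "y = (\<lambda>k. x - (sg / real (Suc k)) *\<^sub>R axis e 1)"
    have yl: "y \<longlonglongrightarrow> x"
    proof -
      have "(\<lambda>k. sg / real (Suc k)) \<longlonglongrightarrow> 0"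
        using LIMSEQ_Suc[OF lim_const_over_n[of sg]] by simp
      hence "(\<lambda>k. x - (sg / real (Suc k)) *\<^sub>R axis e 1) \<longlonglongrightarrow> x - 0 *\<^sub>R axis e (1::real)"
        by (intro tendsto_intros)
      thus ?thesis unfolding y_def by simp
    qed
    have gc: "isCont g x"
    proof -
      have "isCont \<phi> x" using cont by (simp add: continuous_on_eq_continuous_at)
      thus ?thesis unfolding g_def
        by (intro continuous_intros isCont_o2[OF _ isCont_qf])
    qed
    have gy: "g (y k) = 0" for k
    proof -
      have "a - y k = (a - x) + (sg / real (Suc k)) *\<^sub>R axis e 1"
        unfolding y_def by simp
      hence "bf e (a - y k) p = bf e (a - x) p + sg / real (Suc k)"
        using bf_add[of e "a - x" "sg / real (Suc k)" "axis e 1" p] bf_axis[OF pQ] by (simp only:)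
      moreover have "bf e (a - x) p + sg / real (Suc k) \<noteq> 0"
      proof -
        have pk: "0 < 1 / real (Suc k)" by simp
        show ?thesis using pk unfolding sg_def by (smt (verit) divide_minus_left)
      qed
      ultimately show ?thesis unfolding g_def using H by simp
    qed
    have "(\<lambda>k. g (y k)) \<longlonglongrightarrow> g x" using isCont_tendsto_compose[OF gc yl] .
    hence "g x = 0" using gy by (simp add: LIMSEQ_const_iff)
    thus ?thesis unfolding g_def .
  qed
  hence "range \<phi> \<subseteq> lightcone e c" by (auto simp: lightcone_def)
  thus False using nd unfolding degenerate_def by blast
qed

lemma varphi_char:
  fixes e :: "'n::finite" and \<phi> :: "real^'n \<Rightarrow> real^'n"
  assumes pres: "coherency_preserver e \<phi>"
    and pQ: "p \<in> Qset e"
    and w: "w = \<phi> (a + t *\<^sub>R p) - \<phi> a" and wne: "w \<noteq> 0"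
  shows "varphi e \<phi> a p = (1 / (w$e)) *\<^sub>R w"
proof -
  have qp: "qf e p = 0" using pQ by (rule Q_light)
  have qs: "qf e ((a + s *\<^sub>R p) - (a + r *\<^sub>R p)) = 0" for s r
  proof -
    have "(a + s *\<^sub>R p) - (a + r *\<^sub>R p) = (s - r) *\<^sub>R p" by (simp add: algebra_simps)
    thus ?thesis using qf_scale[of e "s - r" p] qp by simp
  qed
  have qw: "qf e w = 0" using pres qs[of t 0] unfolding coherency_preserver_def w by simp
  have we: "w$e \<noteq> 0" and p0Q: "(1 / (w$e)) *\<^sub>R w \<in> Qset e" using normalize_Q[OF qw wne] by auto
  show ?thesis unfolding varphi_def
  proof (rule the_equality)
    show "(1 / (w$e)) *\<^sub>R w \<in> Qset e \<and>
      \<phi> ` {a + t *\<^sub>R p | t. True} \<subseteq> {\<phi> a + s *\<^sub>R ((1 / (w$e)) *\<^sub>R w) | s. True}"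
    proof (intro conjI p0Q subsetI)
      fix z assume "z \<in> \<phi> ` {a + t *\<^sub>R p | t. True}"
      then obtain s where z: "z = \<phi> (a + s *\<^sub>R p)" by auto
      define v where "v = z - \<phi> a"
      have qv: "qf e v = 0" using pres qs[of s 0] unfolding coherency_preserver_def v_def z by simp
      have "w - v = \<phi> (a + t *\<^sub>R p) - \<phi> (a + s *\<^sub>R p)" unfolding w v_def z by simp
      hence qwv: "qf e (w - v) = 0" using pres qs[of t s] unfolding coherency_preserver_def by simp
      have co: "(v$e) *\<^sub>R w = (w$e) *\<^sub>R v" using collinear[OF qw qv qwv] .
      have "v = (1/(w$e)) *\<^sub>R ((w$e) *\<^sub>R v)" using we by simp
      also have "\<dots> = (1/(w$e)) *\<^sub>R ((v$e) *\<^sub>R w)" using co by simp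
      also have "\<dots> = (v$e) *\<^sub>R ((1 / (w$e)) *\<^sub>R w)" by simp
      finally have "v = (v$e) *\<^sub>R ((1 / (w$e)) *\<^sub>R w)" .
      hence "z = \<phi> a + (v$e) *\<^sub>R ((1 / (w$e)) *\<^sub>R w)" unfolding v_def by (metis add.commute diff_add_cancel)
      thus "z \<in> {\<phi> a + s *\<^sub>R ((1 / (w$e)) *\<^sub>R w) | s. True}" by blast
    qed
  next
    fix p' assume H: "p' \<in> Qset e \<and> \<phi> ` {a + t *\<^sub>R p | t. True} \<subseteq> {\<phi> a + s *\<^sub>R p' | s. True}"
    hence "\<phi> (a + t *\<^sub>R p) \<in> {\<phi> a + s *\<^sub>R p' | s. True}" by blast
    then obtain s where "\<phi> (a + t *\<^sub>R p) = \<phi> a + s *\<^sub>R p'" by blast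
    hence ws: "w = s *\<^sub>R p'" unfolding w by simp
    have "p'$e = 1" using H by (simp add: Qset_def)
    hence "w$e = s" using ws by simp
    thus "p' = (1 / (w$e)) *\<^sub>R w" using ws we by simp
  qed
qed

theorem lemma4p2:
  fixes e :: "'n::finite" and \<phi> :: "real^'n \<Rightarrow> real^'n"
  assumes "CARD('n) \<ge> 4"
    and "continuous_on UNIV \<phi>"
    and "coherency_preserver e \<phi>"
    and "\<not> degenerate e \<phi>"
  shows "continuous_on (UNIV \<times> Qset e) (\<lambda>(a, p). varphi e \<phi> a p)"
proof (subst continuous_on_eq_continuous_within, intro ballI)
  fix z0 :: "(real^'n) \<times> (real^'n)" assume z0S: "z0 \<in> UNIV \<times> Qset e"
  obtain a0 p0 where z0: "z0 = (a0, p0)" by (cases z0)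
  have p0Q: "p0 \<in> Qset e" using z0S z0 by auto
  obtain t where tne: "\<phi> (a0 + t *\<^sub>R p0) \<noteq> \<phi> a0"
    using nonconst[OF assms(2,3,4) p0Q] by blast
  define W where "W = (\<lambda>z::(real^'n) \<times> (real^'n). \<phi> (fst z + t *\<^sub>R snd z) - \<phi> (fst z))"
  define h where "h = (\<lambda>z. (1 / (W z $ e)) *\<^sub>R W z)"
  have phic: "isCont \<phi> x" for x using assms(2) by (simp add: continuous_on_eq_continuous_at)
  have Wc: "isCont W z" for z
    unfolding W_def by (intro continuous_intros isCont_o2[OF _ phic])
  have qp0: "qf e p0 = 0" using p0Q by (rule Q_light)
  have "qf e ((a0 + t *\<^sub>R p0) - a0) = 0" using qf_scale[of e t p0] qp0 by simp
  hence "qf e (W z0) = 0" using assms(3) unfolding coherency_preserver_def W_def z0 by simp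
  moreover have "W z0 \<noteq> 0" using tne unfolding W_def z0 by simp
  ultimately have We0: "W z0 $ e \<noteq> 0" using normalize_Q by blast
  have Wec: "isCont (\<lambda>z. W z $ e) z0" using Wc by (intro continuous_intros)
  have hc: "isCont h z0" unfolding h_def using We0 Wc Wec
    by (intro continuous_intros) auto
  obtain d where d: "d > 0" "\<And>y. dist z0 y < d \<Longrightarrow> W y $ e \<noteq> 0"
    using continuous_at_avoid[OF Wec We0] by blast
  show "continuous (at z0 within UNIV \<times> Qset e) (\<lambda>(a, p). varphi e \<phi> a p)"
  proof (rule continuous_transform_within[OF continuous_at_imp_continuous_within[OF hc] d(1) z0S])
    fix z' assume z'S: "z' \<in> UNIV \<times> Qset e" and dz: "dist z' z0 < d"
    obtain a p where z': "z' = (a, p)" by (cases z')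
    have pQ: "p \<in> Qset e" using z'S z' by auto
    have "W z' $ e \<noteq> 0" using d(2)[of z'] dz by (simp add: dist_commute)
    hence Wne: "W z' \<noteq> 0" by auto
    have "varphi e \<phi> a p = (1 / (W z' $ e)) *\<^sub>R W z'"
      by (rule varphi_char[OF assms(3) pQ _ Wne]) (simp add: W_def z')
    thus "h z' = (\<lambda>(a, p). varphi e \<phi> a p) z'" unfolding h_def z' by simp
  qed
qed

end
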